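(* Let $\tilde{\mathcal{A}}(R,\boldsymbol{\sigma},\boldsymbol{t})$ be a twisted generalized Weyl construction with $t_1,\dots,t_n$ regular in $R$ and satisfying the consistency equations, and let $\mathcal{A}(R,\boldsymbol{\sigma},\boldsymbol{t})$ be the corresponding twisted generalized Weyl algebra. If $\mathcal{B}$ is a $\Bbbk$-algebra and $\tilde{\varphi}:\tilde{\mathcal{A}}(R,\boldsymbol{\sigma},\boldsymbol{t})\to\mathcal{B}$ is a $\Bbbk$-algebra homomorphism such that $\tilde\varphi(r)$ is regular (not a zero-divisor) in $\mathcal{B}$ for every regular element $r$ of $R$, then $\tilde\varphi$ induces a $\Bbbk$-algebra homomorphism $\varphi:\mathcal{A}(R,\boldsymbol{\sigma},\boldsymbol{t})\to\mathcal{B}$.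
   Context: Let $\Bbbk$ be a field, $R$ a unital associative $\Bbbk$-algebra, $\sigma_1^{1/2},\dots,\sigma_n^{1/2}$ pairwise commuting automorphisms of $R$ ($\sigma_i=(\sigma_i^{1/2})^2$), $t_1,\dots,t_n\in Z(R)$. The TGWC $\tilde{\mathcal{A}}(R,\boldsymbol{\sigma},\boldsymbol{t})$ is obtained from $R$ by adjoining $X_1^\pm,\dots,X_n^\pm$ with relations $X_i^\pm r=\sigma_i^{\pm1}(r)X_i^\pm$, $X_i^\pm X_i^\mp=\sigma_i^{\pm1/2}(t_i)$, $[X_i^\pm,X_j^\mp]=0$ ($i\ne j$); it is $\mathbb{Z}^n$-graded by $\deg r=0$, $\deg X_i^\pm=\pm\mathbf{e}_i$. The TGWA $\mathcal{A}(R,\boldsymbol{\sigma},\boldsymbol{t})$ is $\tilde{\mathcal{A}}/\mathcal{I}$, where $\mathcal{I}$ is the sum of all graded ideals of $\tilde{\mathcal{A}}$ intersecting the degree-zero part trivially. Consistency equations: $\sigma_j^{1/2}(t_i)\sigma_i^{1/2}(t_j)=\sigma_j^{-1/2}(t_i)\sigma_i^{-1/2}(t_j)$ for $i\ne j$, and $\sigma_i^{1/2}\sigma_j^{1/2}(t_k)\sigma_i^{-1/2}\sigma_j^{-1/2}(t_k)=\sigma_i^{1/2}\sigma_j^{-1/2}(t_k)\sigma_i^{-1/2}\sigma_j^{1/2}(t_k)$ for pairwise distinct $i,j,k$; under these, $R$ is identified with the degree-zero parts of $\tilde{\mathcal{A}}$ and $\mathcal{A}$. *)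

theory Defs
  imports Main
begin

definition is_k_algebra :: "('k::field \<Rightarrow> 'a::ring_1) \<Rightarrow> bool" where
  "is_k_algebra e \<longleftrightarrow>
     e 1 = 1 \<and> (\<forall>c d. e (c + d) = e c + e d) \<and> (\<forall>c d. e (c * d) = e c * e d)
     \<and> (\<forall>c x. e c * x = x * e c)"

definition is_k_alg_aut :: "('k::field \<Rightarrow> 'a::ring_1) \<Rightarrow> ('a \<Rightarrow> 'a) \<Rightarrow> bool" where
  "is_k_alg_aut e s \<longleftrightarrow> bij s \<and> (\<forall>x y. s (x + y) = s x + s y) \<and>
     (\<forall>x y. s (x * y) = s x * s y) \<and> s 1 = 1 \<and> (\<forall>c. s (e c) = e c)"

definition regular :: "'a::ring_1 \<Rightarrow> bool" where
  "regular x \<longleftrightarrow> (\<forall>y. (x * y = 0 \<longrightarrow> y = 0) \<and> (y * x = 0 \<longrightarrow> y = 0))"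

section \<open>Free k-algebra on a set of letters: finitely supported functions on words\<close>

definition FA :: "('a list \<Rightarrow> 'k::field) set" where
  "FA = {f. finite {w. f w \<noteq> 0}}"

definition fzero :: "'a list \<Rightarrow> 'k::field" where "fzero = (\<lambda>w. 0)"
definition fone :: "'a list \<Rightarrow> 'k::field" where "fone = (\<lambda>w. if w = [] then 1 else 0)"
definition fgen :: "'a \<Rightarrow> 'a list \<Rightarrow> 'k::field" where "fgen a = (\<lambda>w. if w = [a] then 1 else 0)"
definition fadd :: "('a list \<Rightarrow> 'k::field) \<Rightarrow> ('a list \<Rightarrow> 'k) \<Rightarrow> 'a list \<Rightarrow> 'k" where
  "fadd f g = (\<lambda>w. f w + g w)"
definition fsub :: "('a list \<Rightarrow> 'k::field) \<Rightarrow> ('a list \<Rightarrow> 'k) \<Rightarrow> 'a list \<Rightarrow> 'k" where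
  "fsub f g = (\<lambda>w. f w - g w)"
definition fsmul :: "'k::field \<Rightarrow> ('a list \<Rightarrow> 'k) \<Rightarrow> 'a list \<Rightarrow> 'k" where
  "fsmul c f = (\<lambda>w. c * f w)"
definition fmul :: "('a list \<Rightarrow> 'k::field) \<Rightarrow> ('a list \<Rightarrow> 'k) \<Rightarrow> 'a list \<Rightarrow> 'k" where
  "fmul f g = (\<lambda>w. \<Sum>i\<le>length w. f (take i w) * g (drop i w))"

definition is_ideal :: "('a list \<Rightarrow> 'k::field) set \<Rightarrow> bool" where
  "is_ideal J \<longleftrightarrow> J \<subseteq> FA \<and> fzero \<in> J \<and> (\<forall>f\<in>J. \<forall>g\<in>J. fadd f g \<in> J) \<and>
     (\<forall>c. \<forall>f\<in>J. fsmul c f \<in> J) \<and> (\<forall>f\<in>J. \<forall>g\<in>FA. fmul f g \<in> J \<and> fmul g f \<in> J)"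

definition gen_ideal :: "('a list \<Rightarrow> 'k::field) set \<Rightarrow> ('a list \<Rightarrow> 'k) set" where
  "gen_ideal S = \<Inter>{J. is_ideal J \<and> S \<subseteq> J}"

definition is_k_alg_hom_F :: "('k::field \<Rightarrow> 'b::ring_1) \<Rightarrow> (('a list \<Rightarrow> 'k) \<Rightarrow> 'b) \<Rightarrow> bool" where
  "is_k_alg_hom_F eB \<psi> \<longleftrightarrow> \<psi> fone = 1 \<and>
     (\<forall>f\<in>FA. \<forall>g\<in>FA. \<psi> (fadd f g) = \<psi> f + \<psi> g \<and> \<psi> (fmul f g) = \<psi> f * \<psi> g) \<and>
     (\<forall>c. \<forall>f\<in>FA. \<psi> (fsmul c f) = eB c * \<psi> f)"

section \<open>Letters of the TGWC: Inl r for r in R, Inr (i,True) = X_i^+, Inr (i,False) = X_i^-\<close>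

type_synonym ('r, 'n) letter = "'r + 'n \<times> bool"

definition Xp :: "'n \<Rightarrow> ('r, 'n) letter list \<Rightarrow> 'k::field" where "Xp i = fgen (Inr (i, True))"
definition Xm :: "'n \<Rightarrow> ('r, 'n) letter list \<Rightarrow> 'k::field" where "Xm i = fgen (Inr (i, False))"
definition Rg :: "'r \<Rightarrow> ('r, 'n) letter list \<Rightarrow> 'k::field" where "Rg r = fgen (Inl r)"

definition ldeg :: "('r, 'n) letter \<Rightarrow> 'n \<Rightarrow> int" where
  "ldeg a = (case a of Inl r \<Rightarrow> (\<lambda>j. 0)
                     | Inr (i, b) \<Rightarrow> (\<lambda>j. if j = i then (if b then 1 else -1) else 0))"
definition wdeg :: "('r, 'n) letter list \<Rightarrow> 'n \<Rightarrow> int" where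
  "wdeg w = (\<lambda>j. \<Sum>a\<leftarrow>w. ldeg a j)"

definition component :: "('n \<Rightarrow> int) \<Rightarrow> (('r, 'n) letter list \<Rightarrow> 'k::field) \<Rightarrow> ('r, 'n) letter list \<Rightarrow> 'k" where
  "component d f = (\<lambda>w. if wdeg w = d then f w else 0)"

definition graded :: "(('r, 'n) letter list \<Rightarrow> 'k::field) set \<Rightarrow> bool" where
  "graded J \<longleftrightarrow> (\<forall>f\<in>J. \<forall>d. component d f \<in> J)"

definition F0 :: "(('r, 'n) letter list \<Rightarrow> 'k::field) set" where
  "F0 = {f\<in>FA. \<forall>w. f w \<noteq> 0 \<longrightarrow> wdeg w = (\<lambda>j. 0)}"

text \<open>sh i is sigma_i^{1/2}; sigma_i = sh i o sh i; negative powers via inverses.\<close>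
definition tgwc_rels :: "('k::field \<Rightarrow> 'r::ring_1) \<Rightarrow> ('n \<Rightarrow> 'r \<Rightarrow> 'r) \<Rightarrow> ('n \<Rightarrow> 'r)
    \<Rightarrow> (('r, 'n) letter list \<Rightarrow> 'k) set" where
  "tgwc_rels eR sh t =
     {fsub (fmul (Rg r) (Rg s)) (Rg (r * s)) | r s. True}
   \<union> {fsub (fadd (Rg r) (Rg s)) (Rg (r + s)) | r s. True}
   \<union> {fsub (Rg (eR c)) (fsmul c fone) | c. True}
   \<union> {fsub (fmul (Xp i) (Rg r)) (fmul (Rg ((sh i \<circ> sh i) r)) (Xp i)) | i r. True}
   \<union> {fsub (fmul (Xm i) (Rg r)) (fmul (Rg (inv (sh i \<circ> sh i) r)) (Xm i)) | i r. True}
   \<union> {fsub (fmul (Xp i) (Xm i)) (Rg (sh i (t i))) | i. True}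
   \<union> {fsub (fmul (Xm i) (Xp i)) (Rg (inv (sh i) (t i))) | i. True}
   \<union> {fsub (fmul (Xp i) (Xm j)) (fmul (Xm j) (Xp i)) | i j. i \<noteq> j}"

definition tgwc_ideal :: "('k::field \<Rightarrow> 'r::ring_1) \<Rightarrow> ('n \<Rightarrow> 'r \<Rightarrow> 'r) \<Rightarrow> ('n \<Rightarrow> 'r)
    \<Rightarrow> (('r, 'n) letter list \<Rightarrow> 'k) set" where
  "tgwc_ideal eR sh t = gen_ideal (tgwc_rels eR sh t)"

text \<open>Preimage in FA of the ideal I of the TGWC: I is the sum of all graded ideals of the TGWC
  meeting the degree-zero part trivially; such ideals correspond to graded ideals J of FA
  containing K with J \<inter> (F0 + K) \<subseteq> K.\<close>
definition tgwa_ideal :: "('k::field \<Rightarrow> 'r::ring_1) \<Rightarrow> ('n \<Rightarrow> 'r \<Rightarrow> 'r) \<Rightarrow> ('n \<Rightarrow> 'r)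
    \<Rightarrow> (('r, 'n) letter list \<Rightarrow> 'k) set" where
  "tgwa_ideal eR sh t =
     (let K = tgwc_ideal eR sh t in
      gen_ideal (\<Union>{J. is_ideal J \<and> graded J \<and> K \<subseteq> J \<and>
                       J \<inter> {fadd a b | a b. a \<in> F0 \<and> b \<in> K} \<subseteq> K}))"

end

theory Submission
  imports Defs
begin

lemma FA_fzero: "fzero \<in> FA" by (simp add: FA_def fzero_def)

lemma FA_fgen: "fgen a \<in> FA"
proof -
  have "{w. fgen a w \<noteq> 0} \<subseteq> {[a]}" by (auto simp: fgen_def)
  then show ?thesis unfolding FA_def by (auto intro: finite_subset)
qed

lemma FA_fadd: "f \<in> FA \<Longrightarrow> g \<in> FA \<Longrightarrow> fadd f g \<in> FA"
proof -
  assume a: "f \<in> FA" "g \<in> FA"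
  have "{w. fadd f g w \<noteq> 0} \<subseteq> {w. f w \<noteq> 0} \<union> {w. g w \<noteq> 0}" by (auto simp: fadd_def)
  then show ?thesis using a unfolding FA_def by (auto intro: finite_subset)
qed

lemma FA_fsmul: "f \<in> FA \<Longrightarrow> fsmul c f \<in> FA"
proof -
  assume a: "f \<in> FA"
  have "{w. fsmul c f w \<noteq> 0} \<subseteq> {w. f w \<noteq> 0}" by (auto simp: fsmul_def)
  then show ?thesis using a unfolding FA_def by (auto intro: finite_subset)
qed

lemma FA_fmul: "f \<in> FA \<Longrightarrow> g \<in> FA \<Longrightarrow> fmul f g \<in> FA"
proof -
  assume a: "f \<in> FA" "g \<in> FA"
  have "{w. fmul f g w \<noteq> 0} \<subseteq> (\<lambda>(u,v). u @ v) ` ({w. f w \<noteq> 0} \<times> {w. g w \<noteq> 0})"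
  proof
    fix w assume "w \<in> {w. fmul f g w \<noteq> 0}"
    then have "(\<Sum>i\<le>length w. f (take i w) * g (drop i w)) \<noteq> 0" by (simp add: fmul_def)
    then obtain i where "f (take i w) * g (drop i w) \<noteq> 0" by (meson sum.neutral)
    then have "f (take i w) \<noteq> 0" "g (drop i w) \<noteq> 0" by auto
    moreover have "w = (\<lambda>(u,v). u @ v) (take i w, drop i w)" by simp
    ultimately show "w \<in> (\<lambda>(u,v). u @ v) ` ({w. f w \<noteq> 0} \<times> {w. g w \<noteq> 0})" by blast
  qed
  moreover have "finite ((\<lambda>(u,v). u @ v) ` ({w. f w \<noteq> 0} \<times> {w. g w \<noteq> 0}))"
    using a unfolding FA_def by auto
  ultimately show ?thesis unfolding FA_def by (auto intro: finite_subset)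
qed

lemma fsub_eq: "fsub f g = fadd f (fsmul (-1) g)"
  by (auto simp: fsub_def fadd_def fsmul_def)

lemma FA_fsub: "f \<in> FA \<Longrightarrow> g \<in> FA \<Longrightarrow> fsub f g \<in> FA"
  by (simp add: fsub_eq FA_fadd FA_fsmul)

lemma fmul_fgen: "fmul (fgen a) g w = (if w \<noteq> [] \<and> hd w = a then g (tl w) else 0)"
proof (cases w)
  case Nil then show ?thesis by (simp add: fmul_def fgen_def)
next
  case (Cons b w')
  have "fmul (fgen a) g w = fgen a [] * g w +
     (\<Sum>i\<le>length w'. fgen a (b # take i w') * g (drop i w'))"
    unfolding fmul_def Cons by (simp del: sum.atMost_Suc add: sum.atMost_Suc_shift)
  also have "(\<Sum>i\<le>length w'. fgen a (b # take i w') * g (drop i w'))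
     = (\<Sum>i\<le>length w'. if i = 0 then (if b = a then g w' else 0) else 0)"
    by (rule sum.cong) (auto simp: fgen_def)
  also have "\<dots> = (if b = a then g w' else 0)" by simp
  finally show ?thesis using Cons by (simp add: fgen_def)
qed

lemma wdeg_Cons: "wdeg (a # w) = (\<lambda>j. ldeg a j + wdeg w j)"
  by (simp add: wdeg_def)

lemma gen_ideal_sub: "S \<subseteq> gen_ideal S" by (auto simp: gen_ideal_def)
lemma gen_ideal_fzero: "fzero \<in> gen_ideal S" by (auto simp: gen_ideal_def is_ideal_def)
lemma gen_ideal_least: "is_ideal J \<Longrightarrow> S \<subseteq> J \<Longrightarrow> gen_ideal S \<subseteq> J"
  by (auto simp: gen_ideal_def)

lemma eB_basic:
  assumes "is_k_algebra e"
  shows "e 0 = 0" "e (-1) = -1"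
proof -
  have "e 0 = e 0 + e 0" using assms unfolding is_k_algebra_def by (metis add_0)
  then show z: "e 0 = 0" by simp
  have "e 0 = e 1 + e (-1)" using assms unfolding is_k_algebra_def by (metis add.right_inverse)
  then show "e (-1) = -1" using z assms by (simp add: is_k_algebra_def add_eq_0_iff2 minus_equation_iff[of "e (-1)"])
qed

lemma psi_fzero:
  assumes "is_k_alg_hom_F eB \<psi>" shows "\<psi> fzero = 0"
proof -
  have "fadd fzero fzero = fzero" by (simp add: fadd_def fzero_def)
  then have "\<psi> fzero = \<psi> fzero + \<psi> fzero" using assms FA_fzero
    unfolding is_k_alg_hom_F_def by metis
  then show ?thesis by simp
qed

lemma psi_fsub:
  assumes "is_k_alg_hom_F eB \<psi>" "is_k_algebra eB" "f \<in> FA" "g \<in> FA"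
  shows "\<psi> (fsub f g) = \<psi> f - \<psi> g"
proof -
  have "\<psi> (fsub f g) = \<psi> f + \<psi> (fsmul (-1) g)"
    using assms FA_fsmul unfolding fsub_eq is_k_alg_hom_F_def by blast
  also have "\<psi> (fsmul (-1) g) = eB (-1) * \<psi> g"
    using assms unfolding is_k_alg_hom_F_def by blast
  finally show ?thesis using eB_basic(2)[OF assms(2)] by simp
qed

lemma aut_regular:
  assumes "is_k_alg_aut e s" "regular x"
  shows "regular (s x)" "regular (inv s x)"
proof -
  have b: "bij s" and m: "\<And>x y. s (x * y) = s x * s y" and ad: "\<And>x y. s (x + y) = s x + s y"
    using assms unfolding is_k_alg_aut_def by auto
  have s0: "s 0 = 0" using ad[of 0 0] by simp
  have inj: "\<And>a b. s a = s b \<Longrightarrow> a = b" using b unfolding bij_def by (simp add: inj_eq)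
  have sinv: "\<And>y. s (inv s y) = y" using b by (simp add: bij_is_surj surj_f_inv_f)
  have rall: "\<forall>y. (x * y = 0 \<longrightarrow> y = 0) \<and> (y * x = 0 \<longrightarrow> y = 0)"
    using assms(2) unfolding regular_def by assumption
  have rx1: "\<And>y. x * y = 0 \<Longrightarrow> y = 0"
    by (rule mp[OF conjunct1[OF spec[OF rall]]])
  have rx2: "\<And>y. y * x = 0 \<Longrightarrow> y = 0"
    by (rule mp[OF conjunct2[OF spec[OF rall]]])
  show "regular (s x)" unfolding regular_def
  proof (intro allI conjI impI)
    fix y assume h: "s x * y = 0"
    have "s (x * inv s y) = s x * s (inv s y)" by (rule m)
    also have "\<dots> = s x * y" by (simp add: sinv)
    also have "\<dots> = s 0" using h s0 by simp
    finally have "x * inv s y = 0" by (rule inj)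
    then have "inv s y = 0" by (rule rx1)
    then have "s (inv s y) = 0" using s0 by simp
    then show "y = 0" by (simp add: sinv)
  next
    fix y assume h: "y * s x = 0"
    have "s (inv s y * x) = s (inv s y) * s x" by (rule m)
    also have "\<dots> = y * s x" by (simp add: sinv)
    also have "\<dots> = s 0" using h s0 by simp
    finally have "inv s y * x = 0" by (rule inj)
    then have "inv s y = 0" by (rule rx2)
    then have "s (inv s y) = 0" using s0 by simp
    then show "y = 0" by (simp add: sinv)
  qed
  show "regular (inv s x)" unfolding regular_def
  proof (intro allI conjI impI)
    fix y assume h: "inv s x * y = 0"
    have "x * s y = s (inv s x) * s y" by (simp add: sinv)
    also have "\<dots> = s (inv s x * y)" by (rule m[symmetric])
    also have "\<dots> = 0" using h s0 by simp
    finally have "s y = 0" by (rule rx1)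
    then have "s y = s 0" using s0 by simp
    then show "y = 0" by (rule inj)
  next
    fix y assume h: "y * inv s x = 0"
    have "s y * x = s y * s (inv s x)" by (simp add: sinv)
    also have "\<dots> = s (y * inv s x)" by (rule m[symmetric])
    also have "\<dots> = 0" using h s0 by simp
    finally have "s y = 0" by (rule rx2)
    then have "s y = s 0" using s0 by simp
    then show "y = 0" by (rule inj)
  qed
qed

lemma ideal_FA: "is_ideal J \<Longrightarrow> f \<in> J \<Longrightarrow> f \<in> FA"
  unfolding is_ideal_def by (erule conjE) (erule subsetD)

lemma ideal_lmul: "is_ideal J \<Longrightarrow> f \<in> J \<Longrightarrow> g \<in> FA \<Longrightarrow> fmul g f \<in> J"
proof -
  assume J: "is_ideal J" and f: "f \<in> J" and g: "g \<in> FA"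
  have "\<forall>f\<in>J. \<forall>g\<in>FA. fmul f g \<in> J \<and> fmul g f \<in> J" using J unfolding is_ideal_def by (elim conjE)
  then have "fmul f g \<in> J \<and> fmul g f \<in> J" using f g by simp
  then show ?thesis by (rule conjunct2)
qed

lemma ker_ideal:
  fixes \<psi> :: "('a list \<Rightarrow> 'k::field) \<Rightarrow> 'b::ring_1"
  assumes h: "is_k_alg_hom_F eB \<psi>" and "is_k_algebra eB"
  shows "is_ideal {f\<in>FA. \<psi> f = 0}"
proof -
  have add: "\<And>f g. f \<in> FA \<Longrightarrow> g \<in> FA \<Longrightarrow> \<psi> (fadd f g) = \<psi> f + \<psi> g"
    and mul: "\<And>f g. f \<in> FA \<Longrightarrow> g \<in> FA \<Longrightarrow> \<psi> (fmul f g) = \<psi> f * \<psi> g"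
    and sm: "\<And>c f. f \<in> FA \<Longrightarrow> \<psi> (fsmul c f) = eB c * \<psi> f"
    using h unfolding is_k_alg_hom_F_def by blast+
  show ?thesis unfolding is_ideal_def
  proof (intro conjI ballI allI)
    show "{f \<in> FA. \<psi> f = 0} \<subseteq> FA" by blast
    show "fzero \<in> {f \<in> FA. \<psi> f = 0}" using psi_fzero[OF h] FA_fzero by simp
  next
    fix f g :: "'a list \<Rightarrow> 'k" assume "f \<in> {f \<in> FA. \<psi> f = 0}" "g \<in> {f \<in> FA. \<psi> f = 0}"
    then have "f \<in> FA" "\<psi> f = 0" "g \<in> FA" "\<psi> g = 0" by simp_all
    then show "fadd f g \<in> {f \<in> FA. \<psi> f = 0}" using add[of f g] FA_fadd[of f g] by simp
  next
    fix c f assume "f \<in> {f \<in> FA. \<psi> f = 0}"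
    then have "f \<in> FA" "\<psi> f = 0" by simp_all
    then show "fsmul c f \<in> {f \<in> FA. \<psi> f = 0}" using sm[of f c] FA_fsmul[of f c] by simp
  next
    fix f g :: "'a list \<Rightarrow> 'k" assume "f \<in> {f \<in> FA. \<psi> f = 0}" "g \<in> FA"
    then have "f \<in> FA" "\<psi> f = 0" "g \<in> FA" by simp_all
    then show "fmul f g \<in> {f \<in> FA. \<psi> f = 0}"
      using mul[of f g] FA_fmul[of f g] by simp
  next
    fix f g :: "'a list \<Rightarrow> 'k" assume "f \<in> {f \<in> FA. \<psi> f = 0}" "g \<in> FA"
    then have "f \<in> FA" "\<psi> f = 0" "g \<in> FA" by simp_all
    then show "fmul g f \<in> {f \<in> FA. \<psi> f = 0}"
      using mul[of g f] FA_fmul[of g f] by simp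
  qed
qed

lemma ideal_fsub: "is_ideal J \<Longrightarrow> f \<in> J \<Longrightarrow> g \<in> J \<Longrightarrow> fsub f g \<in> J"
proof -
  assume J: "is_ideal J" and f: "f \<in> J" and g: "g \<in> J"
  have "fsmul (-1) g \<in> J" using J g unfolding is_ideal_def by blast
  then show ?thesis using J f unfolding fsub_eq is_ideal_def by blast
qed

lemma measure_dec:
  fixes d :: "'n::finite \<Rightarrow> int"
  assumes "\<bar>x\<bar> < \<bar>d i\<bar>"
  shows "(\<Sum>j\<in>UNIV. nat \<bar>(d(i := x)) j\<bar>) < (\<Sum>j\<in>UNIV. nat \<bar>d j\<bar>)"
proof -
  have a: "(\<Sum>j\<in>UNIV. nat \<bar>(d(i := x)) j\<bar>) = nat \<bar>x\<bar> + (\<Sum>j\<in>UNIV - {i}. nat \<bar>d j\<bar>)"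
    by (subst sum.remove[of UNIV i]) auto
  have b: "(\<Sum>j\<in>UNIV. nat \<bar>d j\<bar>) = nat \<bar>d i\<bar> + (\<Sum>j\<in>UNIV - {i}. nat \<bar>d j\<bar>)"
    by (subst sum.remove[of UNIV i]) auto
  show ?thesis unfolding a b using assms by simp
qed

lemma step_kill:
  fixes eR :: "'k::field \<Rightarrow> 'r::ring_1"
    and eB :: "'k \<Rightarrow> 'b::ring_1"
    and \<psi> :: "(('r, 'n) letter list \<Rightarrow> 'k) \<Rightarrow> 'b"
  assumes B_alg: "is_k_algebra eB"
    and hom: "is_k_alg_hom_F eB \<psi>"
    and kill: "\<forall>f\<in>tgwc_ideal eR sh t. \<psi> f = 0"
    and reg: "regular (\<psi> (Rg r))"
    and rel: "fsub (fmul a b) (Rg r) \<in> tgwc_rels eR sh t"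
    and aFA: "a \<in> FA" and bFA: "b \<in> FA" and gFA: "g \<in> FA"
    and z: "\<psi> (fmul b g) = 0"
  shows "\<psi> g = 0"
proof -
  have RFA: "Rg r \<in> FA" by (simp add: Rg_def FA_fgen)
  have abFA: "fmul a b \<in> FA" using aFA bFA by (rule FA_fmul)
  have "\<psi> (fsub (fmul a b) (Rg r)) = 0"
    using kill rel gen_ideal_sub unfolding tgwc_ideal_def by blast
  then have e: "\<psi> (fmul a b) = \<psi> (Rg r)" using psi_fsub[OF hom B_alg abFA RFA] by simp
  have hb: "\<psi> (fmul a b) = \<psi> a * \<psi> b" "\<psi> (fmul b g) = \<psi> b * \<psi> g"
    using hom aFA bFA gFA unfolding is_k_alg_hom_F_def by auto
  have "\<psi> (Rg r) * \<psi> g = \<psi> a * (\<psi> b * \<psi> g)" using e hb by (metis mult.assoc)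
  also have "\<dots> = 0" using z hb by simp
  finally show ?thesis using reg unfolding regular_def by blast
qed

lemma homog_kill:
  fixes eR :: "'k::field \<Rightarrow> 'r::ring_1"
    and eB :: "'k \<Rightarrow> 'b::ring_1"
    and sh :: "'n::finite \<Rightarrow> 'r \<Rightarrow> 'r"
    and t :: "'n \<Rightarrow> 'r"
    and \<psi> :: "(('r, 'n) letter list \<Rightarrow> 'k) \<Rightarrow> 'b"
  assumes B_alg: "is_k_algebra eB"
    and sh_aut: "\<And>i. is_k_alg_aut eR (sh i)"
    and t_regular: "\<And>i. regular (t i)"
    and hom: "is_k_alg_hom_F eB \<psi>"
    and kill: "\<forall>f\<in>tgwc_ideal eR sh t. \<psi> f = 0"
    and reg_pres: "\<And>r. regular r \<Longrightarrow> regular (\<psi> (Rg r))"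
    and J: "is_ideal J"
    and JK: "J \<inter> {fadd a b | a b. a \<in> F0 \<and> b \<in> tgwc_ideal eR sh t} \<subseteq> tgwc_ideal eR sh t"
  shows "(\<Sum>j\<in>UNIV. nat \<bar>d j\<bar>) = m \<Longrightarrow> g \<in> J \<Longrightarrow> (\<forall>w. g w \<noteq> 0 \<longrightarrow> wdeg w = d) \<Longrightarrow> \<psi> g = 0"
proof (induction m arbitrary: d g rule: less_induct)
  case (less m)
  have gFA: "g \<in> FA" using J less.prems(2) by (rule ideal_FA)
  show ?case
  proof (cases "d = (\<lambda>j. 0)")
    case True
    have "g \<in> F0" using gFA less.prems True unfolding F0_def by auto
    moreover have "g = fadd g fzero" by (simp add: fadd_def fzero_def)
    moreover have "fzero \<in> tgwc_ideal eR sh t" unfolding tgwc_ideal_def by (rule gen_ideal_fzero)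
    ultimately have "g \<in> tgwc_ideal eR sh t" using JK less.prems by blast
    then show ?thesis using kill by blast
  next
    case False
    then obtain i where di: "d i \<noteq> 0" by auto
    show ?thesis
    proof (cases "d i > 0")
      case pos: True
      define a :: "('r, 'n) letter" where "a = Inr (i, False)"
      define g' where "g' = fmul (fgen a) g"
      define d' where "d' = d(i := d i - 1)"
      have g'J: "g' \<in> J" unfolding g'_def using J less.prems(2) FA_fgen by (rule ideal_lmul)
      have hg': "\<forall>w. g' w \<noteq> 0 \<longrightarrow> wdeg w = d'"
      proof (intro allI impI)
        fix w assume "g' w \<noteq> 0"
        then have w: "w \<noteq> []" "hd w = a" "g (tl w) \<noteq> 0" unfolding g'_def fmul_fgen
          by (auto split: if_splits)
        then have "w = a # tl w" by (cases w) simp_all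
        then have "wdeg w = (\<lambda>j. ldeg a j + wdeg (tl w) j)" by (metis wdeg_Cons)
        then show "wdeg w = d'" using w less.prems
          by (auto simp: d'_def a_def ldeg_def)
      qed
      have "(\<Sum>j\<in>UNIV. nat \<bar>d' j\<bar>) < m" unfolding d'_def using measure_dec[of "d i - 1" d i] pos less.prems
        by simp
      then have z: "\<psi> g' = 0" using less.IH g'J hg' by blast
      show ?thesis
      proof (rule step_kill[OF B_alg hom kill _ _ _ _ gFA])
        show "regular (\<psi> (Rg (sh i (t i))))" using reg_pres aut_regular(1)[OF sh_aut t_regular] by blast
        show "fsub (fmul (Xp i) (fgen a)) (Rg (sh i (t i))) \<in> tgwc_rels eR sh t"
          unfolding tgwc_rels_def a_def Xm_def[symmetric] by blast
        show "Xp i \<in> FA" by (simp add: Xp_def FA_fgen)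
        show "fgen a \<in> FA" by (rule FA_fgen)
        show "\<psi> (fmul (fgen a) g) = 0" using z g'_def by simp
      qed
    next
      case neg: False
      define a :: "('r, 'n) letter" where "a = Inr (i, True)"
      define g' where "g' = fmul (fgen a) g"
      define d' where "d' = d(i := d i + 1)"
      have g'J: "g' \<in> J" unfolding g'_def using J less.prems(2) FA_fgen by (rule ideal_lmul)
      have hg': "\<forall>w. g' w \<noteq> 0 \<longrightarrow> wdeg w = d'"
      proof (intro allI impI)
        fix w assume "g' w \<noteq> 0"
        then have w: "w \<noteq> []" "hd w = a" "g (tl w) \<noteq> 0" unfolding g'_def fmul_fgen
          by (auto split: if_splits)
        then have "w = a # tl w" by (cases w) simp_all
        then have "wdeg w = (\<lambda>j. ldeg a j + wdeg (tl w) j)" by (metis wdeg_Cons)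
        then show "wdeg w = d'" using w less.prems
          by (auto simp: d'_def a_def ldeg_def)
      qed
      have "(\<Sum>j\<in>UNIV. nat \<bar>d' j\<bar>) < m" unfolding d'_def using measure_dec[of "d i + 1" d i] neg di less.prems
        by simp
      then have z: "\<psi> g' = 0" using less.IH g'J hg' by blast
      show ?thesis
      proof (rule step_kill[OF B_alg hom kill _ _ _ _ gFA])
        show "regular (\<psi> (Rg (inv (sh i) (t i))))" using reg_pres aut_regular(2)[OF sh_aut t_regular] by blast
        show "fsub (fmul (Xm i) (fgen a)) (Rg (inv (sh i) (t i))) \<in> tgwc_rels eR sh t"
          unfolding tgwc_rels_def a_def Xp_def[symmetric] by blast
        show "Xm i \<in> FA" by (simp add: Xm_def FA_fgen)
        show "fgen a \<in> FA" by (rule FA_fgen)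
        show "\<psi> (fmul (fgen a) g) = 0" using z g'_def by simp
      qed
    qed
  qed
qed


lemma decomp_kill:
  fixes \<psi> :: "(('r, 'n) letter list \<Rightarrow> 'k::field) \<Rightarrow> 'b::ring_1"
  assumes hom: "is_k_alg_hom_F eB \<psi>"
    and J: "is_ideal J" and gr: "graded J"
    and hk: "\<forall>g d. g \<in> J \<longrightarrow> (\<forall>w. g w \<noteq> 0 \<longrightarrow> wdeg w = d) \<longrightarrow> \<psi> g = 0"
  shows "finite D \<Longrightarrow> f \<in> J \<Longrightarrow> wdeg ` {w. f w \<noteq> 0} \<subseteq> D \<Longrightarrow> \<psi> f = 0"
proof (induction D arbitrary: f rule: finite_induct)
  case empty
  then have "f = fzero" by (auto simp: fzero_def)
  then show ?case using psi_fzero[OF hom] by simp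
next
  case (insert d D)
  define c where "c = component d f"
  define h where "h = fsub f c"
  have cJ: "c \<in> J" using gr insert.prems unfolding graded_def c_def by blast
  have hJ: "h \<in> J" unfolding h_def using ideal_fsub[OF J insert.prems(1) cJ] .
  have "wdeg ` {w. h w \<noteq> 0} \<subseteq> D" using insert.prems
    by (auto simp: h_def c_def fsub_def component_def split: if_splits)
  then have h0: "\<psi> h = 0" using insert.IH hJ by blast
  have "\<forall>w. c w \<noteq> 0 \<longrightarrow> wdeg w = d" by (simp add: c_def component_def)
  then have c0: "\<psi> c = 0" using hk cJ by blast
  have "f = fadd c h" by (auto simp: fadd_def h_def fsub_def)
  moreover have "c \<in> FA" "h \<in> FA" using ideal_FA[OF J cJ] ideal_FA[OF J hJ] by auto
  ultimately have "\<psi> f = \<psi> c + \<psi> h" using hom unfolding is_k_alg_hom_F_def by metis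
  then show ?case using h0 c0 by simp
qed

theorem mainTheorem6:
  fixes eR :: "'k::field \<Rightarrow> 'r::ring_1"
    and eB :: "'k \<Rightarrow> 'b::ring_1"
    and sh :: "'n::finite \<Rightarrow> 'r \<Rightarrow> 'r"
    and t :: "'n \<Rightarrow> 'r"
    and \<psi> :: "(('r, 'n) letter list \<Rightarrow> 'k) \<Rightarrow> 'b"
  assumes R_alg: "is_k_algebra eR"
    and B_alg: "is_k_algebra eB"
    and sh_aut: "\<And>i. is_k_alg_aut eR (sh i)"
    and sh_comm: "\<And>i j. sh i \<circ> sh j = sh j \<circ> sh i"
    and t_central: "\<And>i r. t i * r = r * t i"
    and t_regular: "\<And>i. regular (t i)"
    and consist1: "\<And>i j. i \<noteq> j \<Longrightarrow>
        sh j (t i) * sh i (t j) = inv (sh j) (t i) * inv (sh i) (t j)"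
    and consist2: "\<And>i j k. i \<noteq> j \<Longrightarrow> j \<noteq> k \<Longrightarrow> i \<noteq> k \<Longrightarrow>
        sh i (sh j (t k)) * inv (sh i) (inv (sh j) (t k))
          = sh i (inv (sh j) (t k)) * inv (sh i) (sh j (t k))"
    and hom: "is_k_alg_hom_F eB \<psi>"
    and hom_kills_K: "\<forall>f\<in>tgwc_ideal eR sh t. \<psi> f = 0"
    and reg_pres: "\<And>r. regular r \<Longrightarrow> regular (\<psi> (Rg r))"
  shows "\<forall>f\<in>tgwa_ideal eR sh t. \<psi> f = 0"
proof -
  let ?K = "tgwc_ideal eR sh t"
  let ?S = "\<Union>{J. is_ideal J \<and> graded J \<and> ?K \<subseteq> J \<and>
                       J \<inter> {fadd a b | a b. a \<in> F0 \<and> b \<in> ?K} \<subseteq> ?K}"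
  have "?S \<subseteq> {f\<in>FA. \<psi> f = 0}"
  proof
    fix f assume "f \<in> ?S"
    then obtain J where J: "is_ideal J" "graded J"
      "J \<inter> {fadd a b | a b. a \<in> F0 \<and> b \<in> ?K} \<subseteq> ?K" and fJ: "f \<in> J" by blast
    have fFA: "f \<in> FA" using J(1) fJ by (rule ideal_FA)
    have hk: "\<forall>g d. g \<in> J \<longrightarrow> (\<forall>w. g w \<noteq> 0 \<longrightarrow> wdeg w = d) \<longrightarrow> \<psi> g = 0"
      using homog_kill[OF B_alg sh_aut t_regular hom hom_kills_K reg_pres J(1) J(3)] by blast
    have "finite (wdeg ` {w. f w \<noteq> 0})" using fFA unfolding FA_def by simp
    then have "\<psi> f = 0" using decomp_kill[OF hom J(1) J(2) hk] fJ by blast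
    then show "f \<in> {f\<in>FA. \<psi> f = 0}" using fFA by simp
  qed
  then have "gen_ideal ?S \<subseteq> {f\<in>FA. \<psi> f = 0}"
    by (rule gen_ideal_least[OF ker_ideal[OF hom B_alg]])
  then show ?thesis unfolding tgwa_ideal_def Let_def by blast
qed

end
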